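(* Let $\alpha_1,\alpha_2,\alpha_3:\mathbb N\to[0,\infty)$ be non-negative, bounded and increasing functions with $\alpha_1(0)=\alpha_2(0)=\alpha_3(0)=0$ and $\lim_{c\to\infty}(\alpha_1(c)+\alpha_2(c))<1$, and let $\lambda>0$. Consider the equation $w(c)=\min\{\alpha_1(c)w(c+1)+\alpha_2(c)w(c-1)+\alpha_3(c);\ \lambda\},\qquad c\in\mathbb N,\qquad(\ast)$ where the term $\alpha_2(0)w(-1)$ is taken to be $0$. Then: (a) equation $(\ast)$ has exactly one bounded solution $w:\mathbb N\to\mathbb R$; (b) let $\zeta_j=\lim_{c\to\infty}\alpha_j(c)$ for $j=1,2,3$ and $\lambda^*=\frac{\zeta_3}{1-\zeta_1-\zeta_2}$. If $\lambda<\lambda^*$, then there is $c^*\in\mathbb N$, $c^*\ge1$, such that the first term $\alpha_1(c)w(c+1)+\alpha_2(c)w(c-1)+\alpha_3(c)$ in the minimum in $(\ast)$ (with $w$ the bounded solution) is strictly bigger than $\lambda$ if and only if $c\ge c^*$. If $\lambda\ge\lambda^*$, then this first term is not bigger than $\lambda$, and hence equals $w(c)$, for all $c\in\mathbb N$. *)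

theory Defs
  imports Complex_Main
begin

definition first_term :: "(nat \<Rightarrow> real) \<Rightarrow> (nat \<Rightarrow> real) \<Rightarrow> (nat \<Rightarrow> real) \<Rightarrow> (nat \<Rightarrow> real) \<Rightarrow> nat \<Rightarrow> real" where
  "first_term a1 a2 a3 w c =
     a1 c * w (c + 1) + (if c = 0 then 0 else a2 c * w (c - 1)) + a3 c"

definition solves_eq :: "(nat \<Rightarrow> real) \<Rightarrow> (nat \<Rightarrow> real) \<Rightarrow> (nat \<Rightarrow> real) \<Rightarrow> real \<Rightarrow> (nat \<Rightarrow> real) \<Rightarrow> bool" where
  "solves_eq a1 a2 a3 lam w \<longleftrightarrow> (\<forall>c. w c = min (first_term a1 a2 a3 w c) lam)"

definition bounded_fun :: "(nat \<Rightarrow> real) \<Rightarrow> bool" where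
  "bounded_fun w \<longleftrightarrow> (\<exists>B. \<forall>c. \<bar>w c\<bar> \<le> B)"

end

theory Submission
  imports Defs
begin

lemma first_term_mono_w:
  assumes "\<And>c. a1 c \<ge> 0" "\<And>c. a2 c \<ge> 0" "\<And>c. w c \<le> v c"
  shows "first_term a1 a2 a3 w c \<le> first_term a1 a2 a3 v c"
  using assms by (auto simp: first_term_def intro!: add_mono mult_left_mono)

lemma first_term_mono_c:
  assumes n1: "\<And>c. a1 c \<ge> 0" and n2: "\<And>c. a2 c \<ge> 0"
    and m1: "mono a1" and m2: "mono a2" and m3: "mono a3"
    and mw: "mono w" and pw: "\<And>c. w c \<ge> 0"
  shows "mono (first_term a1 a2 a3 w)"
proof (rule incseq_SucI)
  fix c
  have t1: "a1 c * w (c+1) \<le> a1 (Suc c) * w (Suc c + 1)"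
    by (rule mult_mono) (auto intro: monoD[OF m1] monoD[OF mw] n1 pw)
  have t2: "(if c = 0 then 0 else a2 c * w (c - 1)) \<le> a2 (Suc c) * w c"
  proof (cases "c = 0")
    case True then show ?thesis using n2 pw by simp
  next
    case False then show ?thesis
      by simp (rule mult_mono, auto intro: monoD[OF m2] monoD[OF mw] n2 pw)
  qed
  have t3: "a3 c \<le> a3 (Suc c)" by (rule monoD[OF m3]) simp
  show "first_term a1 a2 a3 w c \<le> first_term a1 a2 a3 w (Suc c)"
    using t1 t2 t3 by (simp add: first_term_def)
qed

lemma exists_sol:
  assumes n1: "\<And>c. a1 c \<ge> 0" and n2: "\<And>c. a2 c \<ge> 0" and n3: "\<And>c. a3 c \<ge> 0"
    and m1: "mono a1" and m2: "mono a2" and m3: "mono a3"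
    and lam: "lam > 0"
  shows "\<exists>w. solves_eq a1 a2 a3 lam w \<and> (\<forall>c. 0 \<le> w c \<and> w c \<le> lam) \<and> mono w"
proof -
  define T where "T = (\<lambda>w c. min (first_term a1 a2 a3 w c) lam)"
  define W where "W n = (T ^^ n) (\<lambda>_. 0)" for n
  have WS: "W (Suc n) = T (W n)" for n by (simp add: W_def)
  have W0: "W 0 c = 0" for c by (simp add: W_def)
  have Tmono: "T w c \<le> T v c" if "\<And>c. w c \<le> v c" for w v c
  proof -
    have "first_term a1 a2 a3 w c \<le> first_term a1 a2 a3 v c"
      by (rule first_term_mono_w) (use n1 n2 that in auto)
    then show ?thesis by (auto simp: T_def)
  qed
  have inc: "W n c \<le> W (Suc n) c" for n c
  proof (induction n arbitrary: c)
    case 0 show ?case using n3 lam by (simp add: WS W0 T_def first_term_def)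
  next
    case (Suc n) then show ?case by (metis WS Tmono)
  qed
  have ub: "W n c \<le> lam" for n c
    using lam by (cases n) (auto simp: WS W0 T_def)
  have nn: "0 \<le> W n c" for n c
    using lift_Suc_mono_le[of "\<lambda>n. W n c" 0 n] inc W0 by simp
  have mW: "mono (W n)" for n
  proof (induction n)
    case 0 then show ?case by (simp add: W0 mono_def)
  next
    case (Suc n)
    have "mono (first_term a1 a2 a3 (W n))"
      by (rule first_term_mono_c[OF n1 n2 m1 m2 m3 Suc nn])
    then show ?case unfolding WS T_def mono_def by (meson min.mono order_refl)
  qed
  have conv: "\<exists>L. (\<lambda>n. W n c) \<longlonglongrightarrow> L \<and> (\<forall>n. W n c \<le> L)" for c
  proof -
    have "incseq (\<lambda>n. W n c)" by (rule incseq_SucI) (rule inc)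
    then obtain L where "(\<lambda>n. W n c) \<longlonglongrightarrow> L" "\<forall>n. W n c \<le> L"
      using incseq_convergent[of "\<lambda>n. W n c" lam] ub by blast
    then show ?thesis by blast
  qed
  define w where "w c = lim (\<lambda>n. W n c)" for c
  have wl: "(\<lambda>n. W n c) \<longlonglongrightarrow> w c" for c
    using conv[of c] unfolding w_def by (metis convergentI convergent_LIMSEQ_iff)
  have sol: "w c = min (first_term a1 a2 a3 w c) lam" for c
  proof -
    have "(\<lambda>n. first_term a1 a2 a3 (W n) c) \<longlonglongrightarrow> first_term a1 a2 a3 w c"
      unfolding first_term_def
      by (cases "c = 0") (auto intro!: tendsto_intros wl)
    then have "(\<lambda>n. W (Suc n) c) \<longlonglongrightarrow> min (first_term a1 a2 a3 w c) lam"
      unfolding WS T_def by (auto intro!: tendsto_intros)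
    moreover have "(\<lambda>n. W (Suc n) c) \<longlonglongrightarrow> w c"
      using LIMSEQ_Suc[OF wl[of c]] .
    ultimately show ?thesis using LIMSEQ_unique by blast
  qed
  have "0 \<le> w c" for c using LIMSEQ_le_const[OF wl[of c], of 0] nn by auto
  moreover have "w c \<le> lam" for c using LIMSEQ_le_const2[OF wl[of c], of lam] ub by auto
  moreover have "mono w"
    unfolding mono_def by (auto intro!: LIMSEQ_le[OF wl wl] monoD[OF mW])
  ultimately show ?thesis using sol unfolding solves_eq_def by blast
qed

lemma min_lip: "\<bar>min (x::real) l - min y l\<bar> \<le> \<bar>x - y\<bar>"
  by (simp add: min_def abs_if)

lemma unique_sol:
  assumes n1: "\<And>c. a1 c \<ge> 0" and n2: "\<And>c. a2 c \<ge> 0"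
    and q: "\<And>c. a1 c + a2 c \<le> q" "q < 1"
    and v: "bounded_fun v" "solves_eq a1 a2 a3 lam v"
    and w: "bounded_fun w" "solves_eq a1 a2 a3 lam w"
  shows "v = w"
proof -
  from v(1) obtain B1 where B1: "\<And>c. \<bar>v c\<bar> \<le> B1" unfolding bounded_fun_def by blast
  from w(1) obtain B2 where B2: "\<And>c. \<bar>w c\<bar> \<le> B2" unfolding bounded_fun_def by blast
  define D where "D = (SUP c. \<bar>v c - w c\<bar>)"
  have bdd: "bdd_above (range (\<lambda>c. \<bar>v c - w c\<bar>))"
  proof (rule bdd_aboveI[of _ "B1+B2"])
    fix x assume "x \<in> range (\<lambda>c. \<bar>v c - w c\<bar>)"
    then obtain c where "x = \<bar>v c - w c\<bar>" by blast
    then show "x \<le> B1 + B2" using B1[of c] B2[of c] by linarith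
  qed
  have le: "\<bar>v c - w c\<bar> \<le> D" for c unfolding D_def by (rule cSUP_upper[OF _ bdd]) simp
  have D0: "0 \<le> D" using le[of 0] by simp
  have step: "\<bar>v c - w c\<bar> \<le> q * D" for c
  proof -
    have "\<bar>v c - w c\<bar> \<le> \<bar>first_term a1 a2 a3 v c - first_term a1 a2 a3 w c\<bar>"
      using v(2) w(2) min_lip unfolding solves_eq_def by simp
    also have eq: "first_term a1 a2 a3 v c - first_term a1 a2 a3 w c
       = a1 c * (v (c+1) - w (c+1)) + (if c = 0 then 0 else a2 c * (v (c-1) - w (c-1)))"
      by (simp add: first_term_def algebra_simps)
    have h1: "\<bar>a1 c * (v (c+1) - w (c+1))\<bar> \<le> a1 c * D"
      using le[of "c+1"] n1[of c] by (simp add: abs_mult mult_left_mono)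
    have h2: "\<bar>(if c = 0 then 0 else a2 c * (v (c-1) - w (c-1)))\<bar> \<le> a2 c * D"
      using le[of "c-1"] n2[of c] D0 by (auto simp: abs_mult mult_left_mono)
    have "\<bar>first_term a1 a2 a3 v c - first_term a1 a2 a3 w c\<bar> \<le> a1 c * D + a2 c * D"
      unfolding eq using h1 h2 abs_triangle_ineq[of "a1 c * (v (c+1) - w (c+1))" "(if c = 0 then 0 else a2 c * (v (c-1) - w (c-1)))"] by linarith
    also have "\<dots> = (a1 c + a2 c) * D" by (simp add: algebra_simps)
    also have "\<dots> \<le> q * D" by (rule mult_right_mono[OF q(1) D0])
    finally show ?thesis .
  qed
  have "D \<le> q * D" unfolding D_def by (rule cSUP_least) (auto intro: step[unfolded D_def])
  then have "D \<le> 0" using q(2) D0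
  proof -
    assume a: "D \<le> q * D"
    show ?thesis
    proof (rule ccontr)
      assume "\<not> D \<le> 0"
      then have "q * D < 1 * D" using q(2) by (intro mult_strict_right_mono) auto
      then show False using a by simp
    qed
  qed
  then have "\<bar>v c - w c\<bar> \<le> 0" for c using le[of c] by linarith
  then show ?thesis by force
qed

lemma partb:
  fixes a1 a2 a3 w :: "nat \<Rightarrow> real"
  assumes n1: "\<And>c. a1 c \<ge> 0" and n2: "\<And>c. a2 c \<ge> 0" and n3: "\<And>c. a3 c \<ge> 0"
    and m1: "mono a1" and m2: "mono a2" and m3: "mono a3"
    and zero: "a1 0 = 0" "a3 0 = 0" and lam: "lam > 0"
    and l1: "a1 \<longlonglongrightarrow> z1" and l2: "a2 \<longlonglongrightarrow> z2" and l3: "a3 \<longlonglongrightarrow> z3"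
    and b1: "\<And>c. a1 c \<le> z1" and b2: "\<And>c. a2 c \<le> z2" and b3: "\<And>c. a3 c \<le> z3"
    and q: "z1 + z2 < 1"
    and ws: "solves_eq a1 a2 a3 lam w" and w0: "\<And>c. 0 \<le> w c" and wl: "\<And>c. w c \<le> lam"
    and mw: "mono w"
  shows "(lam < z3 / (1 - z1 - z2) \<longrightarrow> (\<exists>cstar::nat. cstar \<ge> 1 \<and>
             (\<forall>c. first_term a1 a2 a3 w c > lam \<longleftrightarrow> c \<ge> cstar)))
       \<and> (lam \<ge> z3 / (1 - z1 - z2) \<longrightarrow>
             (\<forall>c. first_term a1 a2 a3 w c \<le> lam \<and> w c = first_term a1 a2 a3 w c))"
proof -
  define F where "F = first_term a1 a2 a3 w"
  have Fm: "mono F" unfolding F_def by (rule first_term_mono_c[OF n1 n2 m1 m2 m3 mw w0])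
  have F0: "F 0 = 0" by (simp add: F_def first_term_def zero)
  have wF: "w c = min (F c) lam" for c using ws unfolding solves_eq_def F_def by simp
  have FS: "F (Suc c) = a1 (Suc c) * w (c + 2) + a2 (Suc c) * w c + a3 (Suc c)" for c
    by (simp add: F_def first_term_def)
  have den: "1 - z1 - z2 > 0" using q by simp
  have P1: "\<exists>cstar::nat. cstar \<ge> 1 \<and> (\<forall>c. F c > lam \<longleftrightarrow> c \<ge> cstar)"
    if lt: "lam < z3 / (1 - z1 - z2)"
  proof -
    have ex: "\<exists>c. F c > lam"
    proof (rule ccontr)
      assume "\<not> (\<exists>c. F c > lam)"
      then have wF': "w c = F c" for c using wF[of c] by (simp add: not_less min_def)
      obtain L where L: "w \<longlonglongrightarrow> L" "\<forall>i. w i \<le> L"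
        using incseq_convergent[of w lam] mw wl by blast
      have "(\<lambda>c. a1 (c + 1) * w (c + 2) + a2 (c + 1) * w c + a3 (c + 1))
              \<longlonglongrightarrow> z1 * L + z2 * L + z3"
        by (intro tendsto_intros LIMSEQ_ignore_initial_segment l1 l2 l3 L(1))
      moreover have "(\<lambda>c. a1 (c + 1) * w (c + 2) + a2 (c + 1) * w c + a3 (c + 1)) = (\<lambda>c. w (c + 1))"
      proof
        fix c show "a1 (c + 1) * w (c + 2) + a2 (c + 1) * w c + a3 (c + 1) = w (c + 1)"
          using wF'[of "c+1"] FS[of c] by simp
      qed
      ultimately have A: "(\<lambda>c. w (c + 1)) \<longlonglongrightarrow> z1 * L + z2 * L + z3" by simp
      have B: "(\<lambda>c. w (c + 1)) \<longlonglongrightarrow> L" by (rule LIMSEQ_ignore_initial_segment[OF L(1)])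
      have "L = z1 * L + z2 * L + z3" using LIMSEQ_unique[OF B A] .
      then have "L * (1 - z1 - z2) = z3" by (simp add: algebra_simps)
      then have "L = z3 / (1 - z1 - z2)" using den by (simp add: eq_divide_eq)
      moreover have "L \<le> lam" using LIMSEQ_le_const2[OF L(1), of lam] wl by auto
      ultimately show False using lt by simp
    qed
    define cs where "cs = (LEAST c. F c > lam)"
    have cs: "F cs > lam" unfolding cs_def using ex by (metis LeastI)
    have "cs \<noteq> 0"
    proof
      assume "cs = 0" then show False using cs F0 lam by simp
    qed
    moreover have "F c > lam \<longleftrightarrow> c \<ge> cs" for c
    proof
      assume "F c > lam" then show "c \<ge> cs" unfolding cs_def by (rule Least_le)
    next
      assume "c \<ge> cs" then show "F c > lam" using monoD[OF Fm, of cs c] cs by simp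
    qed
    ultimately show ?thesis by (intro exI[of _ cs]) auto
  qed
  have P2: "\<forall>c. F c \<le> lam \<and> w c = F c" if ge: "lam \<ge> z3 / (1 - z1 - z2)"
  proof -
    have g: "z3 \<le> lam * (1 - z1 - z2)" using ge den by (simp add: divide_le_eq)
    have "F c \<le> lam" for c
    proof (rule ccontr)
      assume "\<not> F c \<le> lam"
      then have c0: "F c > lam" by simp
      have wl': "w d = lam" if "d \<ge> c" for d
        using wF[of d] monoD[OF Fm that] c0 by (simp add: min_def)
      have "F (Suc c) = a1 (Suc c) * lam + a2 (Suc c) * lam + a3 (Suc c)"
        using FS[of c] wl'[of c] wl'[of "c+2"] by simp
      also have "\<dots> \<le> z1 * lam + z2 * lam + z3"
        using b1 b2 b3 lam by (intro add_mono mult_right_mono) auto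
      also have "\<dots> \<le> lam" using g by (simp add: algebra_simps)
      finally have "F (Suc c) \<le> lam" .
      moreover have "F (Suc c) > lam" using monoD[OF Fm, of c "Suc c"] c0 by simp
      ultimately show False by simp
    qed
    then show ?thesis using wF by (simp add: min_def)
  qed
  show ?thesis using P1 P2 unfolding F_def by blast
qed

theorem lemma5p2:
  fixes a1 a2 a3 :: "nat \<Rightarrow> real" and lam :: real
  assumes nonneg: "\<And>c. a1 c \<ge> 0" "\<And>c. a2 c \<ge> 0" "\<And>c. a3 c \<ge> 0"
    and bdd: "bounded_fun a1" "bounded_fun a2" "bounded_fun a3"
    and incr: "mono a1" "mono a2" "mono a3"
    and zero: "a1 0 = 0" "a2 0 = 0" "a3 0 = 0"
    and lim_lt: "lim (\<lambda>c. a1 c + a2 c) < 1"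
    and lam_pos: "lam > 0"
  shows "(\<exists>!w. bounded_fun w \<and> solves_eq a1 a2 a3 lam w)
    \<and> (\<forall>w. bounded_fun w \<and> solves_eq a1 a2 a3 lam w \<longrightarrow>
          (let lamstar = lim a3 / (1 - lim a1 - lim a2) in
            (lam < lamstar \<longrightarrow>
               (\<exists>cstar::nat. cstar \<ge> 1 \<and>
                  (\<forall>c. first_term a1 a2 a3 w c > lam \<longleftrightarrow> c \<ge> cstar)))
          \<and> (lam \<ge> lamstar \<longrightarrow>
               (\<forall>c. first_term a1 a2 a3 w c \<le> lam \<and> w c = first_term a1 a2 a3 w c))))"
proof -
  have conv: "\<exists>z. a \<longlonglongrightarrow> z \<and> (\<forall>c. a c \<le> z)" if ab: "bounded_fun a" and am: "mono a" for a :: "nat \<Rightarrow> real"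
  proof -
    from ab obtain B where "\<And>c. \<bar>a c\<bar> \<le> B" unfolding bounded_fun_def by blast
    then have "\<forall>c. a c \<le> B" by (meson abs_ge_self order_trans)
    then obtain z where "a \<longlonglongrightarrow> z" "\<forall>c. a c \<le> z" using incseq_convergent[of a B] am by blast
    then show ?thesis by blast
  qed
  obtain z1 where z1: "a1 \<longlonglongrightarrow> z1" "\<And>c. a1 c \<le> z1" using conv[OF bdd(1) incr(1)] by blast
  obtain z2 where z2: "a2 \<longlonglongrightarrow> z2" "\<And>c. a2 c \<le> z2" using conv[OF bdd(2) incr(2)] by blast
  obtain z3 where z3: "a3 \<longlonglongrightarrow> z3" "\<And>c. a3 c \<le> z3" using conv[OF bdd(3) incr(3)] by blast
  have L1: "lim a1 = z1" using z1(1) by (rule limI)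
  have L2: "lim a2 = z2" using z2(1) by (rule limI)
  have L3: "lim a3 = z3" using z3(1) by (rule limI)
  have "(\<lambda>c. a1 c + a2 c) \<longlonglongrightarrow> z1 + z2" by (intro tendsto_intros z1 z2)
  then have "lim (\<lambda>c. a1 c + a2 c) = z1 + z2" by (rule limI)
  then have q: "z1 + z2 < 1" using lim_lt by simp
  have qb: "a1 c + a2 c \<le> z1 + z2" for c using z1(2) z2(2) by (rule add_mono)
  obtain w where w: "solves_eq a1 a2 a3 lam w" "\<forall>c. 0 \<le> w c \<and> w c \<le> lam" "mono w"
    using exists_sol[OF nonneg incr lam_pos] by blast
  have wb: "bounded_fun w" unfolding bounded_fun_def using w(2) by (intro exI[of _ lam]) auto
  have uniq: "v = w" if "bounded_fun v" "solves_eq a1 a2 a3 lam v" for v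
    by (rule unique_sol[OF nonneg(1,2) qb q that wb w(1)])
  have pb: "(lam < z3 / (1 - z1 - z2) \<longrightarrow> (\<exists>cstar::nat. cstar \<ge> 1 \<and>
             (\<forall>c. first_term a1 a2 a3 w c > lam \<longleftrightarrow> c \<ge> cstar)))
       \<and> (lam \<ge> z3 / (1 - z1 - z2) \<longrightarrow>
             (\<forall>c. first_term a1 a2 a3 w c \<le> lam \<and> w c = first_term a1 a2 a3 w c))"
    by (rule partb[OF nonneg incr zero(1) zero(3) lam_pos z1(1) z2(1) z3(1) z1(2) z2(2) z3(2) q w(1)])
       (use w(2,3) in auto)
  show ?thesis
  proof (intro conjI allI impI)
    show "\<exists>!w. bounded_fun w \<and> solves_eq a1 a2 a3 lam w"
      using wb w(1) uniq by blast
  next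
    fix v assume "bounded_fun v \<and> solves_eq a1 a2 a3 lam v"
    then have "v = w" using uniq by blast
    then show "let lamstar = lim a3 / (1 - lim a1 - lim a2) in
            (lam < lamstar \<longrightarrow>
               (\<exists>cstar::nat. cstar \<ge> 1 \<and>
                  (\<forall>c. first_term a1 a2 a3 v c > lam \<longleftrightarrow> c \<ge> cstar)))
          \<and> (lam \<ge> lamstar \<longrightarrow>
               (\<forall>c. first_term a1 a2 a3 v c \<le> lam \<and> v c = first_term a1 a2 a3 v c))"
      using pb unfolding L1 L2 L3 Let_def by simp
  qed
qed

end
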